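(* Let $n,r\ge1$ and $\mathbf U^0=\mathbb Q(v)[K_1^{\pm1},\dots,K_n^{\pm1}]$. The ideal of $\mathbf U^0$ generated by $$I_r=\{1-\textstyle\sum_{\lambda\in\Lambda(n,r)}\mathfrak L_\lambda\}\cup\{\mathfrak L_\lambda\mathfrak L_\mu-\delta_{\lambda,\mu}\mathfrak L_\lambda\mid\lambda,\mu\in\Lambda(n,r)\}\cup\{K_i\mathfrak L_\lambda-v^{\lambda_i}\mathfrak L_\lambda\mid 1\le i\le n,\ \lambda\in\Lambda(n,r)\}$$ coincides with the ideal generated by $$J_r=\{K_1K_2\cdots K_n-v^r\}\cup\{[K_i;r+1]^!\mid 1\le i\le n\}.$$
   Context: $\Lambda(n,r)$ is the set of compositions $\lambda=(\lambda_1,\dots,\lambda_n)\in\mathbb N^n$ with $\sum\lambda_i=r$. For an invertible element $X$ and integers $a$, $t\ge1$: $\left[{X;a\atop t}\right]=\prod_{s=1}^t\frac{Xv^{a-s+1}-X^{-1}v^{-a+s-1}}{v^s-v^{-s}}$ and $\left[{X;a\atop 0}\right]=1$. For $\mu\in\mathbb N^n$, $\mathfrak L_\mu=\prod_{i=1}^n\left[{K_i;0\atop\mu_i}\right]$, and $[K_i;r+1]^!=(K_i-1)(K_i-v)\cdots(K_i-v^r)$. *)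

theory Defs
  imports "HOL-Library.Poly_Mapping" "HOL-Computational_Algebra.Polynomial"
          "HOL-Computational_Algebra.Fraction_Field"
begin

type_synonym qv = "rat poly fract"

definition vv :: qv where "vv = Fract [:0, 1:] 1"

text \<open>U^0 = Q(v)[K_i^{+-1} | i in 'n]: group algebra of the free abelian group
  ('n =>0 int) (exponent vectors) over Q(v); 'n is a finite type with n = CARD('n).\<close>
type_synonym 'n U0 = "('n \<Rightarrow>\<^sub>0 int) \<Rightarrow>\<^sub>0 qv"

definition sc :: "qv \<Rightarrow> 'n U0" where "sc c = Poly_Mapping.single 0 c"

definition Kv :: "'n \<Rightarrow> 'n U0" where "Kv i = Poly_Mapping.single (Poly_Mapping.single i 1) 1"
definition Kinv :: "'n \<Rightarrow> 'n U0" where "Kinv i = Poly_Mapping.single (Poly_Mapping.single i (-1)) 1"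

text \<open>[X; a over t] for an invertible X with inverse Xi.\<close>
definition qbin :: "'n U0 \<Rightarrow> 'n U0 \<Rightarrow> int \<Rightarrow> nat \<Rightarrow> 'n U0" where
  "qbin X Xi a t = (\<Prod>s\<in>{1..t}.
      (X * sc (vv powi (a - int s + 1)) - Xi * sc (vv powi (- a + int s - 1)))
      * sc (inverse (vv ^ s - vv powi (- int s))))"

definition Lfr :: "('n::finite \<Rightarrow> nat) \<Rightarrow> 'n U0" where
  "Lfr mu = (\<Prod>i\<in>UNIV. qbin (Kv i) (Kinv i) 0 (mu i))"

definition Kfact :: "'n \<Rightarrow> nat \<Rightarrow> 'n U0" where
  "Kfact i r = (\<Prod>j\<in>{0..r}. Kv i - sc (vv ^ j))"

definition Lambda :: "nat \<Rightarrow> ('n::finite \<Rightarrow> nat) set" where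
  "Lambda r = {lam. (\<Sum>i\<in>UNIV. lam i) = r}"

definition gen_ideal :: "'a::comm_ring_1 set \<Rightarrow> 'a set" where
  "gen_ideal S = {\<Sum>x\<in>F. c x * x | F c. finite F \<and> F \<subseteq> S}"

definition Ir :: "nat \<Rightarrow> ('n::finite) U0 set" where
  "Ir r = {1 - (\<Sum>lam\<in>Lambda r. Lfr lam)}
        \<union> {Lfr lam * Lfr mu - (if lam = mu then Lfr lam else 0) | lam mu. lam \<in> Lambda r \<and> mu \<in> Lambda r}
        \<union> {Kv i * Lfr lam - sc (vv ^ lam i) * Lfr lam | i lam. lam \<in> Lambda r}"

definition Jr :: "nat \<Rightarrow> ('n::finite) U0 set" where
  "Jr r = {(\<Prod>i\<in>UNIV. Kv i) - sc (vv ^ r)} \<union> {Kfact i r | i. True}"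

end

theory Submission
  imports Defs "HOL-Library.FuncSet"
begin

lemma gi_base: "x \<in> S \<Longrightarrow> x \<in> gen_ideal S"
  unfolding gen_ideal_def
  by (rule CollectI, rule exI[of _ "{x}"], rule exI[of _ "\<lambda>_. 1"]) auto

lemma gi_zero: "0 \<in> gen_ideal S"
  unfolding gen_ideal_def by (rule CollectI, rule exI[of _ "{}"]) auto

lemma gi_elim: "a \<in> gen_ideal S \<Longrightarrow> \<exists>F c. a = (\<Sum>x\<in>F. c x * x) \<and> finite F \<and> F \<subseteq> S"
  unfolding gen_ideal_def mem_Collect_eq by metis

lemma gi_intro: "finite F \<Longrightarrow> F \<subseteq> S \<Longrightarrow> a = (\<Sum>x\<in>F. c x * x) \<Longrightarrow> a \<in> gen_ideal S"
  unfolding gen_ideal_def by blast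

lemma gi_mult: "a \<in> gen_ideal S \<Longrightarrow> y * a \<in> gen_ideal S"
proof -
  assume "a \<in> gen_ideal S"
  then obtain F c where a: "a = (\<Sum>x\<in>F. c x * x)" "finite F" "F \<subseteq> S"
    using gi_elim by metis
  have "y * a = (\<Sum>x\<in>F. (y * c x) * x)" by (simp add: a sum_distrib_left mult.assoc)
  thus ?thesis using a by (intro gi_intro[of F]) auto
qed

lemma sum_restr: fixes c :: "'a \<Rightarrow> 'a::comm_ring_1" shows "finite T \<Longrightarrow> F \<subseteq> T \<Longrightarrow> (\<Sum>x\<in>T. (if x \<in> F then c x else 0) * x) = (\<Sum>x\<in>F. c x * x)"
proof -
  assume T: "finite T" "F \<subseteq> T"
  have "(\<Sum>x\<in>T. (if x \<in> F then c x else 0) * x) = (\<Sum>x\<in>F. (if x \<in> F then c x else 0) * x)"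
    by (rule sum.mono_neutral_right) (use T in auto)
  also have "\<dots> = (\<Sum>x\<in>F. c x * x)" by (rule sum.cong) auto
  finally show ?thesis .
qed

lemma gi_add: "a \<in> gen_ideal S \<Longrightarrow> b \<in> gen_ideal S \<Longrightarrow> a + b \<in> gen_ideal S"
proof -
  assume A: "a \<in> gen_ideal S" and B: "b \<in> gen_ideal S"
  obtain F c where a: "a = (\<Sum>x\<in>F. c x * x)" "finite F" "F \<subseteq> S"
    using gi_elim[OF A] by blast
  obtain G d where b: "b = (\<Sum>x\<in>G. d x * x)" "finite G" "G \<subseteq> S"
    using gi_elim[OF B] by blast
  define e where "e x = (if x \<in> F then c x else 0) + (if x \<in> G then d x else 0)" for x
  have "(\<Sum>x\<in>F \<union> G. e x * x) = (\<Sum>x\<in>F \<union> G. (if x \<in> F then c x else 0) * x)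
        + (\<Sum>x\<in>F \<union> G. (if x \<in> G then d x else 0) * x)"
    unfolding e_def distrib_right by (rule sum.distrib)
  also have "\<dots> = a + b"
    using sum_restr[of "F \<union> G" F c] sum_restr[of "F \<union> G" G d] a b by simp
  finally have eq: "(\<Sum>x\<in>F \<union> G. e x * x) = a + b" .
  show ?thesis
  proof (rule gi_intro[of "F \<union> G" S "a+b" e])
    show "finite (F \<union> G)" using a(2) b(2) by blast
    show "F \<union> G \<subseteq> S" using a(3) b(3) by blast
    show "a + b = (\<Sum>x\<in>F \<union> G. e x * x)" using eq by (rule sym)
  qed
qed

lemma gi_neg: "a \<in> gen_ideal S \<Longrightarrow> - a \<in> gen_ideal S"
  using gi_mult[of a S "-1"] by simp

lemma gi_diff: "a \<in> gen_ideal S \<Longrightarrow> b \<in> gen_ideal S \<Longrightarrow> a - b \<in> gen_ideal S"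
proof -
  assume "a \<in> gen_ideal S" "b \<in> gen_ideal S"
  hence "a + - b \<in> gen_ideal S" by (intro gi_add gi_neg)
  thus ?thesis by (simp only: diff_conv_add_uminus)
qed

lemma gi_multr: "a \<in> gen_ideal S \<Longrightarrow> a * y \<in> gen_ideal S"
  using gi_mult[of a S y] by (simp add: mult.commute)

lemma gi_sum: "(\<And>x. x \<in> A \<Longrightarrow> f x \<in> gen_ideal S) \<Longrightarrow> sum f A \<in> gen_ideal S"
  by (induction A rule: infinite_finite_induct) (auto intro: gi_zero gi_add)

lemma gi_subset: "A \<subseteq> gen_ideal B \<Longrightarrow> gen_ideal A \<subseteq> gen_ideal B"
proof
  fix x assume A: "A \<subseteq> gen_ideal B" and "x \<in> gen_ideal A"
  then obtain F c where x: "x = (\<Sum>y\<in>F. c y * y)" "F \<subseteq> A"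
    using gi_elim by metis
  show "x \<in> gen_ideal B" unfolding x(1)
  proof (rule gi_sum)
    fix y assume "y \<in> F"
    hence "y \<in> gen_ideal B" using x(2) A by blast
    thus "c y * y \<in> gen_ideal B" by (rule gi_mult)
  qed
qed


lemma sc_add: "sc (a + b) = sc a + sc b" by (simp add: sc_def single_add)
lemma sc_diff: "sc (a - b) = sc a - sc b" by (simp add: sc_def single_diff)
lemma sc_uminus: "sc (- a) = - sc a" by (simp add: sc_def single_uminus)
lemma sc_mult: "sc (a * b) = sc a * sc b" by (simp add: sc_def mult_single)
lemma sc_one: "sc 1 = 1" by (simp add: sc_def)
lemma sc_zero: "sc 0 = 0" by (simp add: sc_def)
lemma sc_prod: "sc (prod f A) = (\<Prod>x\<in>A. sc (f x))"
  by (induction A rule: infinite_finite_induct) (simp_all add: sc_one sc_mult)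
lemma sc_sum: "sc (sum f A) = (\<Sum>x\<in>A. sc (f x))"
  by (induction A rule: infinite_finite_induct) (simp_all add: sc_zero sc_add)

section \<open>Eigen-relations modulo an ideal\<close>

definition eig :: "'a U0 set \<Rightarrow> 'a U0 \<Rightarrow> 'a U0 \<Rightarrow> qv \<Rightarrow> bool" where
  "eig S e X c \<longleftrightarrow> X * e - sc c * e \<in> gen_ideal S"

lemma eig_sc: "eig S e (sc c) c"
  unfolding eig_def by (simp add: gi_zero)

lemma eig_add: "eig S e X c \<Longrightarrow> eig S e Y d \<Longrightarrow> eig S e (X + Y) (c + d)"
  unfolding eig_def
proof -
  assume "X * e - sc c * e \<in> gen_ideal S" "Y * e - sc d * e \<in> gen_ideal S"
  hence "(X * e - sc c * e) + (Y * e - sc d * e) \<in> gen_ideal S" by (rule gi_add)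
  moreover have "(X * e - sc c * e) + (Y * e - sc d * e) = (X + Y) * e - sc (c + d) * e"
    by (simp add: sc_add algebra_simps)
  ultimately show "(X + Y) * e - sc (c + d) * e \<in> gen_ideal S" by simp
qed

lemma eig_diff: "eig S e X c \<Longrightarrow> eig S e Y d \<Longrightarrow> eig S e (X - Y) (c - d)"
  unfolding eig_def
proof -
  assume "X * e - sc c * e \<in> gen_ideal S" "Y * e - sc d * e \<in> gen_ideal S"
  hence "(X * e - sc c * e) - (Y * e - sc d * e) \<in> gen_ideal S" by (rule gi_diff)
  moreover have "(X * e - sc c * e) - (Y * e - sc d * e) = (X - Y) * e - sc (c - d) * e"
    by (simp add: sc_diff algebra_simps)
  ultimately show "(X - Y) * e - sc (c - d) * e \<in> gen_ideal S" by simp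
qed

lemma eig_mult: "eig S e X c \<Longrightarrow> eig S e Y d \<Longrightarrow> eig S e (X * Y) (c * d)"
  unfolding eig_def
proof -
  assume h1: "X * e - sc c * e \<in> gen_ideal S" and h2: "Y * e - sc d * e \<in> gen_ideal S"
  have "X * (Y * e - sc d * e) + sc d * (X * e - sc c * e) \<in> gen_ideal S"
    using h1 h2 by (intro gi_add gi_mult)
  moreover have "X * (Y * e - sc d * e) + sc d * (X * e - sc c * e) = (X * Y) * e - sc (c * d) * e"
    by (simp add: sc_mult algebra_simps)
  ultimately show "(X * Y) * e - sc (c * d) * e \<in> gen_ideal S" by simp
qed

lemma eig_one: "eig S e 1 1"
  using eig_sc[of S e 1] by (simp add: sc_one)

lemma eig_prod: "(\<And>x. x \<in> A \<Longrightarrow> eig S e (f x) (g x)) \<Longrightarrow> eig S e (prod f A) (prod g A)"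
  by (induction A rule: infinite_finite_induct) (auto simp: eig_one intro: eig_mult)

lemma eig_sum: "(\<And>x. x \<in> A \<Longrightarrow> eig S e (f x) (g x)) \<Longrightarrow> eig S e (sum f A) (sum g A)"
  by (induction A rule: infinite_finite_induct) (auto simp: eig_sc[of S e 0, unfolded sc_zero] intro: eig_add)

lemma eig_multe: "eig S e X c \<Longrightarrow> eig S (e * f) X c"
  unfolding eig_def
proof -
  assume "X * e - sc c * e \<in> gen_ideal S"
  hence "(X * e - sc c * e) * f \<in> gen_ideal S" by (rule gi_multr)
  thus "X * (e * f) - sc c * (e * f) \<in> gen_ideal S" by (simp add: algebra_simps)
qed

lemma eig_multe': "eig S e X c \<Longrightarrow> eig S (f * e) X c"
  using eig_multe[of S e X c f] by (simp add: mult.commute)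

lemma eig_zero: "eig S e X 0 \<Longrightarrow> X * e \<in> gen_ideal S"
  unfolding eig_def by (simp add: sc_zero)

lemma eig_cong: "eig S e X c \<Longrightarrow> c = d \<Longrightarrow> eig S e X d" by simp

lemma Lambda_le: "lam \<in> Lambda r \<Longrightarrow> lam i \<le> r"
  unfolding Lambda_def using member_le_sum[of i UNIV lam] by auto

lemma finite_Lambda: "finite (Lambda r :: ('n::finite \<Rightarrow> nat) set)"
proof -
  have "Lambda r \<subseteq> PiE UNIV (\<lambda>_. {0..r})"
    using Lambda_le by (auto simp: PiE_UNIV_domain)
  moreover have "finite (PiE (UNIV::'n set) (\<lambda>_. {0..r}))" by (rule finite_PiE) auto
  ultimately show ?thesis by (rule finite_subset)
qed

section \<open>Direction J in I\<close>

lemma decomp_I: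
  fixes x :: "('n::finite) U0"
  assumes "\<And>lam. lam \<in> Lambda r \<Longrightarrow> x * Lfr lam \<in> gen_ideal (Ir r)"
  shows "x \<in> gen_ideal (Ir r)"
proof -
  have a: "x * (1 - (\<Sum>lam\<in>Lambda r. Lfr lam)) \<in> gen_ideal (Ir r)"
    by (intro gi_mult gi_base) (simp add: Ir_def)
  have b: "(\<Sum>lam\<in>Lambda r. x * Lfr lam) \<in> gen_ideal (Ir r)"
    using assms by (intro gi_sum)
  have "x = x * (1 - (\<Sum>lam\<in>Lambda r. Lfr lam)) + (\<Sum>lam\<in>Lambda r. x * Lfr lam)"
    by (simp add: sum_distrib_left algebra_simps)
  thus ?thesis using gi_add[OF a b] by simp
qed

lemma eigI_K: "lam \<in> Lambda r \<Longrightarrow> eig (Ir r) (Lfr lam) (Kv i) (vv ^ lam i)"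
  unfolding eig_def by (intro gi_base) (auto simp: Ir_def)

lemma J_in_I: "Jr r \<subseteq> gen_ideal (Ir r :: ('n::finite) U0 set)"
proof
  fix x :: "'n U0" assume "x \<in> Jr r"
  then consider "x = (\<Prod>i\<in>UNIV. Kv i) - sc (vv ^ r)" | i where "x = Kfact i r"
    unfolding Jr_def by blast
  thus "x \<in> gen_ideal (Ir r)"
  proof cases
    case 1
    show ?thesis
    proof (rule decomp_I)
      fix lam :: "'n \<Rightarrow> nat" assume l: "lam \<in> Lambda r"
      have "eig (Ir r) (Lfr lam) ((\<Prod>i\<in>UNIV. Kv i) - sc (vv ^ r)) ((\<Prod>i\<in>UNIV. vv ^ lam i) - vv ^ r)"
        by (intro eig_diff eig_prod eigI_K l eig_sc)
      moreover have "(\<Prod>i\<in>UNIV. vv ^ lam i) - vv ^ r = 0"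
        using l by (simp add: Lambda_def flip: power_sum)
      ultimately show "x * Lfr lam \<in> gen_ideal (Ir r)" using 1 eig_zero by metis
    qed
  next
    case 2
    show ?thesis
    proof (rule decomp_I)
      fix lam :: "'n \<Rightarrow> nat" assume l: "lam \<in> Lambda r"
      have "eig (Ir r) (Lfr lam) (Kfact i r) (\<Prod>j\<in>{0..r}. vv ^ lam i - vv ^ j)"
        unfolding Kfact_def by (intro eig_diff eig_prod eigI_K l eig_sc)
      moreover have "(\<Prod>j\<in>{0..r}. vv ^ lam i - vv ^ j) = 0"
        using Lambda_le[OF l, of i] by (intro prod_zero bexI[of _ "lam i"]) auto
      ultimately show "x * Lfr lam \<in> gen_ideal (Ir r)" using 2 eig_zero by metis
    qed
  qed
qed


lemma vv_pow: "vv ^ a = Fract ([:0, 1:] ^ a) 1"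
  by (induction a) (simp_all add: vv_def One_fract_def)

lemma vv_ne0: "vv \<noteq> 0"
proof
  assume "vv = 0"
  hence "Fract [:0, 1::rat:] 1 = Fract 0 1" by (simp add: vv_def Zero_fract_def)
  thus False by (simp add: eq_fract)
qed

lemma vv_pow_inj: "vv ^ a = vv ^ b \<longleftrightarrow> a = b"
proof
  assume "vv ^ a = vv ^ b"
  hence "([:0, 1::rat:] ^ a) = [:0, 1:] ^ b" by (simp add: vv_pow eq_fract)
  hence "degree ([:0, 1::rat:] ^ a) = degree ([:0, 1::rat:] ^ b)" by simp
  thus "a = b" by (simp add: degree_power_eq)
qed simp

lemma vv_pow_ne: "vv ^ a \<noteq> 0" using vv_ne0 by simp

lemma gfun_ne: "s \<ge> 1 \<Longrightarrow> vv ^ s - inverse (vv ^ s) \<noteq> 0"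
proof
  assume s: "s \<ge> 1" and "vv ^ s - inverse (vv ^ s) = 0"
  hence "vv ^ s * vv ^ s = 1" using vv_pow_ne[of s] by (simp add: field_simps)
  hence "vv ^ (2 * s) = vv ^ 0" by (simp add: power_add[symmetric] mult_2)
  hence "2 * s = 0" using vv_pow_inj by blast
  thus False using s by simp
qed

definition qval :: "qv \<Rightarrow> qv \<Rightarrow> int \<Rightarrow> nat \<Rightarrow> qv" where
  "qval c ci a t = (\<Prod>s\<in>{1..t}.
      (c * vv powi (a - int s + 1) - ci * vv powi (- a + int s - 1))
      * inverse (vv ^ s - vv powi (- int s)))"

lemma qf_aux: fixes a b :: "'a::field" assumes "a \<noteq> 0" "b \<noteq> 0"
  shows "(a * b) * inverse a - inverse (a * b) * a = b - inverse b"
  using assms by (simp add: field_simps)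

lemma qfactor:
  assumes "1 \<le> s" "s \<le> m + 1"
  shows "vv ^ m * vv powi (0 - int s + 1) - inverse (vv ^ m) * vv powi (- 0 + int s - 1)
         = vv ^ (m + 1 - s) - inverse (vv ^ (m + 1 - s))"
proof -
  define k where "k = m + 1 - s"
  have m: "m = (s - 1) + k" using assms unfolding k_def by simp
  have e1: "0 - int s + 1 = - int (s - 1)" and e2: "- 0 + int s - 1 = int (s - 1)" using assms by auto
  show ?thesis unfolding e1 e2 power_int_minus power_int_of_nat k_def[symmetric]
    unfolding m power_add by (rule qf_aux) (rule vv_pow_ne)+
qed

lemma qval_gt: "m < t \<Longrightarrow> qval (vv ^ m) (inverse (vv ^ m)) 0 t = 0"
proof -
  assume "m < t"
  have z: "vv ^ m * vv powi (0 - int (m+1) + 1) - inverse (vv ^ m) * vv powi (- 0 + int (m+1) - 1) = 0"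
    using qfactor[of "m+1" m] by simp
  show ?thesis unfolding qval_def
  proof (rule prod_zero)
    show "\<exists>s\<in>{1..t}. (vv ^ m * vv powi (0 - int s + 1) - inverse (vv ^ m) * vv powi (- 0 + int s - 1))
        * inverse (vv ^ s - vv powi (- int s)) = 0"
      by (rule bexI[of _ "m + 1"]) (use z \<open>m < t\<close> in simp_all)
  qed simp
qed

lemma qval_eq: "qval (vv ^ m) (inverse (vv ^ m)) 0 m = 1"
proof -
  define g where "g k = vv ^ k - inverse (vv ^ k)" for k
  have "qval (vv ^ m) (inverse (vv ^ m)) 0 m = (\<Prod>s\<in>{1..m}. g (m + 1 - s) * inverse (g s))"
    unfolding qval_def
  proof (rule prod.cong[OF refl])
    fix s assume "s \<in> {1..m}"
    hence s1: "1 \<le> s" and s2: "s \<le> m + 1" by auto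
    show "(vv ^ m * vv powi (0 - int s + 1) - inverse (vv ^ m) * vv powi (- 0 + int s - 1))
        * inverse (vv ^ s - vv powi (- int s)) = g (m + 1 - s) * inverse (g s)"
      unfolding qfactor[OF s1 s2] g_def power_int_minus power_int_of_nat by (rule refl)
  qed
  also have "\<dots> = (\<Prod>s\<in>{1..m}. g (m + 1 - s)) * inverse (\<Prod>s\<in>{1..m}. g s)"
    using prod_inversef[of g "{1..m}"] by (simp add: prod.distrib comp_def)
  also have "(\<Prod>s\<in>{1..m}. g (m + 1 - s)) = (\<Prod>s\<in>{1..m}. g s)"
    by (rule prod.atLeastAtMost_rev[symmetric])
  also have "(\<Prod>s\<in>{1..m}. g s) \<noteq> 0" unfolding g_def using gfun_ne by auto
  hence "(\<Prod>s\<in>{1..m}. g s) * inverse (\<Prod>s\<in>{1..m}. g s) = 1" by simp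
  finally show ?thesis .
qed


definition ev :: "'n U0 \<Rightarrow> qv poly \<Rightarrow> 'n U0" where "ev X p = poly (map_poly sc p) X"

lemma ev_pCons: "ev X (pCons a p) = sc a + X * ev X p"
  unfolding ev_def by (simp add: map_poly_pCons sc_zero)

lemma ev_0: "ev X 0 = 0" by (simp add: ev_def)

lemma ev_add: "ev X (p + q) = ev X p + ev X q"
  by (induction p q rule: poly_induct2) (simp_all add: ev_pCons ev_0 sc_add algebra_simps)

lemma ev_smult: "ev X (smult c p) = sc c * ev X p"
  by (induction p) (simp_all add: ev_pCons ev_0 sc_mult algebra_simps)

lemma ev_mult: "ev X (p * q) = ev X p * ev X q"
  by (induction p) (simp_all add: ev_pCons ev_0 ev_add ev_smult sc_zero algebra_simps)

lemma ev_one: "ev X 1 = 1"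
  unfolding one_pCons by (simp add: ev_pCons ev_0 sc_one)

lemma ev_sum: "ev X (sum f A) = (\<Sum>a\<in>A. ev X (f a))"
  by (induction A rule: infinite_finite_induct) (simp_all add: ev_0 ev_add)

lemma ev_prod: "ev X (prod f A) = (\<Prod>a\<in>A. ev X (f a))"
  by (induction A rule: infinite_finite_induct) (simp_all add: ev_one ev_mult)

lemma ev_lin: "ev X [:- c, 1:] = X - sc c"
  by (simp add: ev_pCons ev_0 sc_one sc_uminus)

section \<open>Lagrange interpolation\<close>

definition cc :: "nat \<Rightarrow> nat \<Rightarrow> qv" where
  "cc r a = (\<Prod>j\<in>{0..r}-{a}. vv ^ a - vv ^ j)"

definition ee :: "nat \<Rightarrow> 'n \<Rightarrow> nat \<Rightarrow> 'n U0" where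
  "ee r i a = sc (inverse (cc r a)) * (\<Prod>j\<in>{0..r}-{a}. Kv i - sc (vv ^ j))"

lemma cc_ne: "cc r a \<noteq> 0"
  unfolding cc_def using vv_pow_inj by (auto simp: prod_zero_iff)

lemma ldelta:
  assumes "m \<in> {0..r}"
  shows "inverse (cc r a) * (\<Prod>j\<in>{0..r}-{a}. vv ^ m - vv ^ j) = (if a = m then 1 else 0)"
proof (cases "a = m")
  case True
  thus ?thesis using cc_ne[of r a] by (simp add: cc_def)
next
  case False
  have "(\<Prod>j\<in>{0..r}-{a}. vv ^ m - vv ^ j) = 0"
    by (rule prod_zero) (use assms False in auto)
  thus ?thesis using False by simp
qed

lemma lagr_poly:
  "(\<Sum>a\<in>{0..r}. smult (inverse (cc r a)) (\<Prod>j\<in>{0..r}-{a}. [:-(vv ^ j), 1:])) = 1"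
  (is "?P = 1")
proof (rule poly_eqI_degree[where A="(\<lambda>m. vv ^ m) ` {0..r}"])
  fix x assume "x \<in> (\<lambda>m. vv ^ m) ` {0..r}"
  then obtain m where m: "m \<in> {0..r}" and x: "x = vv ^ m" by blast
  have "poly ?P x = (\<Sum>a\<in>{0..r}. inverse (cc r a) * (\<Prod>j\<in>{0..r}-{a}. vv ^ m - vv ^ j))"
    by (simp add: poly_sum poly_prod x)
  also have "\<dots> = (\<Sum>a\<in>{0..r}. if a = m then 1 else 0)"
    using ldelta[OF m] by simp
  also have "\<dots> = 1" using m by simp
  finally show "poly ?P x = poly 1 x" by simp
next
  have card: "card ((\<lambda>m. vv ^ m) ` {0..r}) = r + 1"
    by (subst card_image) (auto simp: inj_on_def vv_pow_inj)
  have "degree ?P \<le> r"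
  proof (rule degree_sum_le)
    fix a assume a: "a \<in> {0..r}"
    have "degree (\<Prod>j\<in>{0..r}-{a}. [:-(vv ^ j), 1::qv:]) \<le> (\<Sum>j\<in>{0..r}-{a}. 1)"
      using degree_prod_sum_le[of "{0..r}-{a}" "\<lambda>j. [:-(vv ^ j), 1::qv:]"] by (simp add: comp_def)
    also have "\<dots> \<le> r" using card_Diff_singleton[OF a] by simp
    finally show "degree (smult (inverse (cc r a)) (\<Prod>j\<in>{0..r}-{a}. [:-(vv ^ j), 1:])) \<le> r"
      by (meson degree_smult_le order_trans)
  qed simp
  thus "degree ?P < card ((\<lambda>m. vv ^ m) ` {0..r})" using card by simp
  show "degree (1::qv poly) < card ((\<lambda>m. vv ^ m) ` {0..r})" using card by simp
qed

lemma lagr: "(\<Sum>a\<in>{0..r}. ee r i a) = 1"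
proof -
  have "ev (Kv i) (\<Sum>a\<in>{0..r}. smult (inverse (cc r a)) (\<Prod>j\<in>{0..r}-{a}. [:-(vv ^ j), 1:])) = ev (Kv i) 1"
    by (simp only: lagr_poly)
  thus ?thesis by (simp add: ev_sum ev_smult ev_prod ev_lin ev_one ee_def)
qed


section \<open>Direction I in J\<close>

lemma Kinv_Kv: "Kinv i * Kv i = 1"
proof -
  have "Poly_Mapping.single i (-1::int) + Poly_Mapping.single i 1 = 0"
    by (simp flip: single_add)
  thus ?thesis unfolding Kinv_def Kv_def mult_single by simp
qed

lemma eig_inv:
  assumes h: "eig S e X c" and YX: "Y * X = 1" and c: "c \<noteq> 0"
  shows "eig S e Y (inverse c)"
proof -
  have "(- (Y * sc (inverse c))) * (X * e - sc c * e) \<in> gen_ideal S"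
    using h unfolding eig_def by (rule gi_mult)
  moreover have "(- (Y * sc (inverse c))) * (X * e - sc c * e) = Y * e - sc (inverse c) * e"
  proof -
    have i: "sc (inverse c) * sc c = 1" using c by (simp flip: sc_mult add: sc_one)
    have "(- (Y * sc (inverse c))) * (X * e - sc c * e)
      = - (sc (inverse c) * (Y * X) * e) + Y * (sc (inverse c) * sc c) * e"
      by (simp add: algebra_simps)
    also have "\<dots> = Y * e - sc (inverse c) * e" unfolding i YX by simp
    finally show ?thesis .
  qed
  ultimately show ?thesis unfolding eig_def by simp
qed

lemma eig_kill:
  assumes h: "eig S e X c" and X: "X \<in> gen_ideal S" and c: "c \<noteq> 0"
  shows "e \<in> gen_ideal S"
proof -
  have "X * e - (X * e - sc c * e) \<in> gen_ideal S"
    by (rule gi_diff[OF gi_multr[OF X] h[unfolded eig_def]])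
  hence "sc c * e \<in> gen_ideal S" by simp
  hence "sc (inverse c) * (sc c * e) \<in> gen_ideal S" by (rule gi_mult)
  moreover have "sc (inverse c) * (sc c * e) = e"
    using c by (simp add: mult.assoc[symmetric] flip: sc_mult add: sc_one)
  ultimately show ?thesis by simp
qed

lemma ee_eig:
  assumes a: "a \<in> {0..r}"
  shows "eig (Jr r) (ee r i a) (Kv i) (vv ^ a)"
proof -
  have K: "Kfact i r = (Kv i - sc (vv ^ a)) * (\<Prod>j\<in>{0..r}-{a}. Kv i - sc (vv ^ j))"
    unfolding Kfact_def using a by (simp add: prod.remove)
  have "sc (inverse (cc r a)) * Kfact i r \<in> gen_ideal (Jr r)"
    by (intro gi_mult gi_base) (auto simp: Jr_def)
  moreover have "sc (inverse (cc r a)) * Kfact i r = Kv i * ee r i a - sc (vv ^ a) * ee r i a"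
    unfolding K ee_def by (simp add: algebra_simps)
  ultimately show ?thesis unfolding eig_def by simp
qed

definition EE :: "nat \<Rightarrow> ('n::finite \<Rightarrow> nat) \<Rightarrow> 'n U0" where
  "EE r mu = (\<Prod>i\<in>UNIV. ee r i (mu i))"

definition GG :: "nat \<Rightarrow> ('n::finite \<Rightarrow> nat) set" where
  "GG r = PiE UNIV (\<lambda>_. {0..r})"

lemma GG_iff: "mu \<in> GG r \<longleftrightarrow> (\<forall>i. mu i \<le> r)"
  unfolding GG_def by (auto simp: PiE_UNIV_domain)

lemma finite_GG: "finite (GG r)" unfolding GG_def by (rule finite_PiE) auto

lemma Lambda_GG: "Lambda r \<subseteq> GG r" using Lambda_le GG_iff by blast

lemma EE_eigK:
  assumes mu: "mu \<in> GG r"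
  shows "eig (Jr r) (EE r mu) (Kv i) (vv ^ mu i)"
proof -
  have "EE r mu = ee r i (mu i) * (\<Prod>j\<in>UNIV-{i}. ee r j (mu j))"
    unfolding EE_def by (simp add: prod.remove)
  moreover have "eig (Jr r) (ee r i (mu i)) (Kv i) (vv ^ mu i)"
    using mu by (intro ee_eig) (simp add: GG_iff)
  ultimately show ?thesis using eig_multe by metis
qed

lemma EE_eigKinv:
  assumes mu: "mu \<in> GG r"
  shows "eig (Jr r) (EE r mu) (Kinv i) (inverse (vv ^ mu i))"
  by (rule eig_inv[OF EE_eigK[OF mu] Kinv_Kv vv_pow_ne])

lemma EE_ee:
  assumes mu: "mu \<in> GG r"
  shows "eig (Jr r) (EE r mu) (ee r j b) (if b = mu j then 1 else 0)"
proof -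
  have "eig (Jr r) (EE r mu) (ee r j b)
         (inverse (cc r b) * (\<Prod>k\<in>{0..r}-{b}. vv ^ mu j - vv ^ k))"
    unfolding ee_def by (intro eig_mult eig_sc eig_prod eig_diff EE_eigK mu)
  moreover have "mu j \<in> {0..r}" using mu by (simp add: GG_iff)
  hence "inverse (cc r b) * (\<Prod>k\<in>{0..r}-{b}. vv ^ mu j - vv ^ k) = (if b = mu j then 1 else 0)"
    by (rule ldelta)
  ultimately show ?thesis by simp
qed

lemma EE_EE:
  assumes mu: "mu \<in> GG r"
  shows "eig (Jr r) (EE r mu) (EE r lam) (if lam = mu then 1 else 0)"
proof -
  have "eig (Jr r) (EE r mu) (EE r lam) (\<Prod>i\<in>UNIV. if lam i = mu i then 1 else 0)"
    unfolding EE_def[of r lam] by (intro eig_prod EE_ee mu)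
  moreover have "(\<Prod>i\<in>UNIV. if lam i = mu i then 1 else (0::qv)) = (if lam = mu then 1 else 0)"
  proof (cases "lam = mu")
    case False
    then obtain i where "lam i \<noteq> mu i" by blast
    hence "(\<Prod>i\<in>UNIV. if lam i = mu i then 1 else (0::qv)) = 0"
      by (intro prod_zero) auto
    thus ?thesis using False by simp
  qed simp
  ultimately show ?thesis by simp
qed

lemma EE_L:
  assumes mu: "mu \<in> GG r"
  shows "eig (Jr r) (EE r mu) (Lfr lam) (\<Prod>i\<in>UNIV. qval (vv ^ mu i) (inverse (vv ^ mu i)) 0 (lam i))"
  unfolding Lfr_def qbin_def qval_def
  by (intro eig_prod eig_mult eig_diff eig_sc EE_eigK EE_eigKinv mu)

lemma Lval:
  assumes l: "lam \<in> Lambda r" and m: "mu \<in> Lambda r"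
  shows "(\<Prod>i\<in>UNIV. qval (vv ^ mu i) (inverse (vv ^ mu i)) 0 (lam i)) = (if lam = mu then 1 else 0)"
proof (cases "lam = mu")
  case True
  thus ?thesis by (simp add: qval_eq)
next
  case False
  have "\<exists>i. mu i < lam i"
  proof (rule ccontr)
    assume "\<not> (\<exists>i. mu i < lam i)"
    hence le: "\<forall>i\<in>UNIV. lam i \<le> mu i" by (simp add: not_less)
    from False obtain i where "lam i \<noteq> mu i" by blast
    with le have "\<exists>i\<in>UNIV. lam i < mu i" by (meson le_neq_implies_less UNIV_I)
    hence "sum lam UNIV < sum mu UNIV" using le by (intro sum_strict_mono_ex1) auto
    thus False using l m by (simp add: Lambda_def)
  qed
  then obtain i where i: "mu i < lam i" by blast
  have "(\<Prod>i\<in>UNIV. qval (vv ^ mu i) (inverse (vv ^ mu i)) 0 (lam i)) = 0"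
    by (rule prod_zero) (use i qval_gt in auto)
  thus ?thesis using False by simp
qed

lemma EE_kill:
  assumes mu: "mu \<in> GG r" and nl: "mu \<notin> Lambda r"
  shows "EE r mu \<in> gen_ideal (Jr r)"
proof (rule eig_kill)
  show "eig (Jr r) (EE r mu) ((\<Prod>i\<in>UNIV. Kv i) - sc (vv ^ r)) ((\<Prod>i\<in>UNIV. vv ^ mu i) - vv ^ r)"
    by (intro eig_diff eig_prod eig_sc EE_eigK mu)
  show "(\<Prod>i\<in>UNIV. Kv i) - sc (vv ^ r) \<in> gen_ideal (Jr r)"
    by (intro gi_base) (simp add: Jr_def)
  have "sum mu UNIV \<noteq> r" using nl by (simp add: Lambda_def)
  hence "vv ^ sum mu UNIV \<noteq> vv ^ r" using vv_pow_inj by blast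
  thus "(\<Prod>i\<in>UNIV. vv ^ mu i) - vv ^ r \<noteq> 0" by (simp flip: power_sum)
qed

lemma one_EE: "1 = (\<Sum>mu\<in>GG r. EE r mu)"
proof -
  have "(1::'n U0) = (\<Prod>i\<in>(UNIV::'n set). \<Sum>a\<in>{0..r}. ee r i a)" by (simp add: lagr)
  also have "\<dots> = (\<Sum>mu\<in>GG r. EE r mu)"
    unfolding GG_def EE_def by (rule prod_sum_PiE) auto
  finally show ?thesis .
qed

lemma L_EE:
  fixes lam :: "'n::finite \<Rightarrow> nat"
  assumes l: "lam \<in> Lambda r"
  shows "Lfr lam - EE r lam \<in> gen_ideal (Jr r)"
proof -
  have lG: "lam \<in> GG r" using l Lambda_GG by blast
  have "Lfr lam = (\<Sum>mu\<in>GG r. Lfr lam * EE r mu)"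
    using one_EE[of r] by (metis mult.right_neutral sum_distrib_left)
  moreover have "EE r lam = (\<Sum>mu\<in>GG r. if mu = lam then EE r mu else 0)"
    by (subst sum.delta[OF finite_GG]) (simp add: lG)
  ultimately have eq: "Lfr lam - EE r lam = (\<Sum>mu\<in>GG r. Lfr lam * EE r mu - (if mu = lam then EE r mu else 0))"
    by (simp add: sum_subtractf)
  have "(\<Sum>mu\<in>GG r. Lfr lam * EE r mu - (if mu = lam then EE r mu else 0)) \<in> gen_ideal (Jr r)"
  proof (rule gi_sum)
    fix mu :: "'n \<Rightarrow> nat" assume mu: "mu \<in> GG r"
    show "Lfr lam * EE r mu - (if mu = lam then EE r mu else 0) \<in> gen_ideal (Jr r)"
    proof (cases "mu \<in> Lambda r")
      case True
      have "eig (Jr r) (EE r mu) (Lfr lam) (if lam = mu then 1 else 0)"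
        using EE_L[OF mu, of lam] Lval[OF l True] by simp
      thus ?thesis unfolding eig_def by (auto simp: sc_one sc_zero)
    next
      case False
      hence "mu \<noteq> lam" using l by blast
      thus ?thesis using EE_kill[OF mu False] by (simp add: gi_mult)
    qed
  qed
  thus ?thesis using eq by simp
qed

lemma I_in_J: "Ir r \<subseteq> gen_ideal (Jr r :: ('n::finite) U0 set)"
proof
  fix x :: "'n U0" assume "x \<in> Ir r"
  then consider (c) "x = 1 - (\<Sum>lam\<in>Lambda r. Lfr lam)"
    | (b) lam mu where "x = Lfr lam * Lfr mu - (if lam = mu then Lfr lam else 0)" "lam \<in> Lambda r" "mu \<in> Lambda r"
    | (a) i lam where "x = Kv i * Lfr lam - sc (vv ^ lam i) * Lfr lam" "lam \<in> Lambda r"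
    unfolding Ir_def by blast
  thus "x \<in> gen_ideal (Jr r)"
  proof cases
    case c
    have "(\<Sum>mu\<in>GG r. EE r mu) = (\<Sum>mu\<in>GG r - Lambda r. EE r mu) + (\<Sum>mu\<in>Lambda r. EE r mu)"
      using Lambda_GG finite_GG by (rule sum.subset_diff)
    hence s1: "1 = (\<Sum>mu\<in>GG r - Lambda r. EE r mu) + (\<Sum>mu\<in>Lambda r. EE r mu)"
      using one_EE[of r] by (rule trans[rotated])
    have "x = ((\<Sum>mu\<in>GG r - Lambda r. EE r mu) + (\<Sum>mu\<in>Lambda r. EE r mu)) - (\<Sum>mu\<in>Lambda r. Lfr mu)"
      unfolding c by (subst s1) (rule refl)
    also have "\<dots> = (\<Sum>mu\<in>GG r - Lambda r. EE r mu) + ((\<Sum>mu\<in>Lambda r. EE r mu) - (\<Sum>mu\<in>Lambda r. Lfr mu))"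
      by (rule add_diff_eq[symmetric])
    also have "\<dots> = (\<Sum>mu\<in>GG r - Lambda r. EE r mu) + (\<Sum>mu\<in>Lambda r. EE r mu - Lfr mu)"
      by (simp only: sum_subtractf)
    finally have "x = (\<Sum>mu\<in>GG r - Lambda r. EE r mu) + (\<Sum>mu\<in>Lambda r. EE r mu - Lfr mu)" .
    moreover have "(\<Sum>mu\<in>GG r - Lambda r. EE r mu) \<in> gen_ideal (Jr r :: 'n U0 set)"
      by (intro gi_sum EE_kill) auto
    moreover have "(\<Sum>mu\<in>Lambda r. EE r mu - Lfr mu) \<in> gen_ideal (Jr r :: 'n U0 set)"
      using L_EE gi_neg by (intro gi_sum) fastforce
    ultimately show ?thesis by (simp add: gi_add)
  next
    case b
    have lG: "mu \<in> GG r" using b Lambda_GG by blast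
    have A: "Lfr lam - EE r lam \<in> gen_ideal (Jr r)" by (rule L_EE[OF b(2)])
    have B: "Lfr mu - EE r mu \<in> gen_ideal (Jr r)" by (rule L_EE[OF b(3)])
    have C: "EE r lam * EE r mu - sc (if lam = mu then 1 else 0) * EE r mu \<in> gen_ideal (Jr r)"
      using EE_EE[OF lG, of lam] unfolding eig_def by (simp add: mult.commute)
    show ?thesis
    proof (cases "lam = mu")
      case True
      have "(Lfr lam - EE r lam) * Lfr mu + EE r lam * (Lfr mu - EE r mu)
            + (EE r lam * EE r mu - sc (if lam = mu then 1 else 0) * EE r mu) - (Lfr lam - EE r lam)
            \<in> gen_ideal (Jr r)"
        by (rule gi_diff[OF gi_add[OF gi_add[OF gi_multr[OF A] gi_mult[OF B]] C] A])
      moreover have "(Lfr lam - EE r lam) * Lfr mu + EE r lam * (Lfr mu - EE r mu)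
            + (EE r lam * EE r mu - sc (if lam = mu then 1 else 0) * EE r mu) - (Lfr lam - EE r lam) = x"
        using b True by (simp add: sc_one algebra_simps)
      ultimately show ?thesis by simp
    next
      case False
      have "(Lfr lam - EE r lam) * Lfr mu + EE r lam * (Lfr mu - EE r mu)
            + (EE r lam * EE r mu - sc (if lam = mu then 1 else 0) * EE r mu)
            \<in> gen_ideal (Jr r)"
        by (rule gi_add[OF gi_add[OF gi_multr[OF A] gi_mult[OF B]] C])
      moreover have "(Lfr lam - EE r lam) * Lfr mu + EE r lam * (Lfr mu - EE r mu)
            + (EE r lam * EE r mu - sc (if lam = mu then 1 else 0) * EE r mu) = x"
        using b False by (simp add: sc_zero algebra_simps)
      ultimately show ?thesis by simp
    qed
  next
    case a
    have lG: "lam \<in> GG r" using a Lambda_GG by blast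
    have "Kv i * (Lfr lam - EE r lam) + (Kv i * EE r lam - sc (vv ^ lam i) * EE r lam)
          - sc (vv ^ lam i) * (Lfr lam - EE r lam) \<in> gen_ideal (Jr r)"
      by (rule gi_diff[OF gi_add[OF gi_mult[OF L_EE[OF a(2)]] EE_eigK[OF lG, of i, unfolded eig_def]]
           gi_mult[OF L_EE[OF a(2)]]])
    moreover have "Kv i * (Lfr lam - EE r lam) + (Kv i * EE r lam - sc (vv ^ lam i) * EE r lam)
          - sc (vv ^ lam i) * (Lfr lam - EE r lam) = x"
      using a by (simp add: algebra_simps)
    ultimately show ?thesis by simp
  qed
qed


theorem lemma5p1p2:
  fixes r :: nat
  assumes "r \<ge> 1"
  shows "gen_ideal (Ir r :: ('n::finite) U0 set) = gen_ideal (Jr r)"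
proof
  show "gen_ideal (Ir r :: 'n U0 set) \<subseteq> gen_ideal (Jr r)" by (rule gi_subset[OF I_in_J])
  show "gen_ideal (Jr r :: 'n U0 set) \<subseteq> gen_ideal (Ir r)" by (rule gi_subset[OF J_in_I])
qed

end
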